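(* Let $(a_n)_{n\ge 1}$ be complex numbers and let $\sigma$ be the (finite) abscissa of absolute convergence of $\sum_{n\ge1} a_n n^{-s}$, i.e. $\sum |a_n| n^{-s}$ converges for real $s>\sigma$ and diverges for real $s<\sigma$; let $f(s)=\sum a_n n^{-s}$ for $\Re(s)>\sigma$. Let $c>0$ be real with $c>\sigma$, and let $R_c(x) = \sum_{k=1}^\infty (-1)^{k+1} f(ck)\,x^k/(k-1)!$. Then for every complex $s$ with $-1 < \Re(s) < -\sigma/c$, $$\int_0^\infty R_c(x)\,x^{s-1}\,dx = f(-cs)\,\Gamma(s+1),$$ the integral converging absolutely. *)

theory Defs
  imports "HOL-Analysis.Analysis"
begin

text \<open>Dirichlet series f(s) = sum_{n>=1} a_n n^{-s}; the coefficient a 0 is unused.\<close>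
definition dir_f :: "(nat \<Rightarrow> complex) \<Rightarrow> complex \<Rightarrow> complex" where
  "dir_f a s = (\<Sum>n. a (Suc n) / (of_nat (Suc n)) powr s)"

text \<open>R_c(x) = sum_{k>=1} (-1)^(k+1) f(c k) x^k / (k-1)!, written with k = Suc j.\<close>
definition R_c :: "(nat \<Rightarrow> complex) \<Rightarrow> real \<Rightarrow> real \<Rightarrow> complex" where
  "R_c a c x = (\<Sum>j. (-1) ^ (Suc j + 1) * dir_f a (complex_of_real (c * real (Suc j)))
                       * complex_of_real x ^ Suc j / of_nat (fact j))"

end

theory Submission
  imports Defs
begin


lemma Gamma_scaled:
  fixes z :: complex and b :: real
  assumes z: "Re z > 0" and b: "b > 0"
  shows "((\<lambda>t. of_real t powr (z-1) / of_real (exp (b*t))) has_integral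
            (of_real b powr (-z) * Gamma z)) {0<..}"
proof -
  define F where "F t = indicator {0<..} t *\<^sub>R (of_real t powr (z-1) / of_real (exp t) :: complex)" for t :: real
  define h where "h = (\<lambda>t::real. of_real t powr (z-1) / of_real (exp (b*t)) :: complex)"
  have si1: "set_integrable lebesgue {0<..} (\<lambda>t. of_real t powr (z-1) / of_real (exp t) :: complex)"
    using absolutely_integrable_Gamma_integral'[OF z] by simp
  have "(LINT t:{0<..}|lebesgue. of_real t powr (z-1) / of_real (exp t) :: complex) = Gamma z"
    using set_lebesgue_integral_eq_integral(2)[OF si1] Gamma_integral_complex'[OF z]
    by (simp add: integral_unique)
  hence IF: "integral\<^sup>L lebesgue F = Gamma z"
    unfolding F_def by (simp add: set_lebesgue_integral_def)
  have sih: "set_integrable lebesgue {0<..} h"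
    using absolutely_integrable_Gamma_integral[OF z b] by (simp add: h_def)
  have Fb: "F (b * x) = of_real b powr (z-1) * (indicator {0<..} x *\<^sub>R h x)" for x :: real
  proof (cases "x > 0")
    case True
    have "of_real (b*x) powr (z-1) = of_real b powr (z-1) * (of_real x powr (z-1) :: complex)"
      by (subst of_real_mult, rule powr_times_real) (use True b in auto)
    thus ?thesis using True b by (simp add: F_def h_def indicator_def)
  next
    case False
    hence "\<not> b * x > 0" using b by (simp add: mult_pos_pos zero_less_mult_iff)
    thus ?thesis using False by (simp add: F_def indicator_def)
  qed
  have "Gamma z = \<bar>b\<bar> *\<^sub>R integral\<^sup>L lebesgue (\<lambda>x. F (0 + b * x))"
    using IF lebesgue_integral_real_affine[of b F 0] b by simp
  also have "\<dots> = of_real b * (of_real b powr (z-1) * (LINT x:{0<..}|lebesgue. h x))"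
    using b by (simp add: Fb set_lebesgue_integral_def scaleR_conv_of_real del: of_real_mult)
  also have "of_real b * (of_real b powr (z-1) * (LINT x:{0<..}|lebesgue. h x)) =
             of_real b powr z * (LINT x:{0<..}|lebesgue. h x)"
  proof -
    have "(of_real b :: complex) powr z = of_real b powr ((z - 1) + 1)" by simp
    also have "\<dots> = of_real b powr (z-1) * of_real b powr 1" by (rule powr_add)
    also have "\<dots> = of_real b powr (z-1) * of_real b" by simp
    finally show ?thesis by simp
  qed
  finally have "(LINT x:{0<..}|lebesgue. h x) = of_real b powr (-z) * Gamma z"
    using b by (simp add: powr_minus field_simps)
  with has_integral_set_lebesgue[OF sih] show ?thesis by (simp add: h_def)
qed

lemma Gamma_scaled_real:
  fixes r b :: real
  assumes r: "r > 0" and b: "b > 0"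
  shows "((\<lambda>t. t powr (r-1) / exp (b*t)) has_integral (b powr (-r) * Gamma r)) {0<..}"
proof -
  have "((\<lambda>t. of_real t powr (of_real r - 1) / of_real (exp (b*t))) has_integral
            (of_real b powr (- of_real r) * Gamma (of_real r :: complex))) {0<..}"
    using Gamma_scaled[of "of_real r" b] r b by simp
  also have "(of_real b powr (- of_real r) * Gamma (of_real r :: complex)) = of_real (b powr (-r) * Gamma r)"
    using b by (simp add: powr_of_real[symmetric] Gamma_complex_of_real)
  finally have 1: "((\<lambda>t. of_real t powr (of_real r - 1) / of_real (exp (b*t))) has_integral
            (of_real (b powr (-r) * Gamma r) :: complex)) {0<..}" .
  have "((\<lambda>t. complex_of_real (t powr (r-1) / exp (b*t))) has_integral
            (of_real (b powr (-r) * Gamma r) :: complex)) {0<..}"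
    by (rule has_integral_cong[THEN iffD1, OF _ 1]) (simp add: powr_of_real[symmetric])
  from has_integral_linear[OF this bounded_linear_Re] show ?thesis by (simp add: o_def)
qed

lemma suminf_swap_abs:
  fixes u :: "nat \<Rightarrow> nat \<Rightarrow> complex"
  assumes s1: "\<And>j. summable (\<lambda>n. norm (u j n))"
      and s2: "summable (\<lambda>j. \<Sum>n. norm (u j n))"
  shows "(\<Sum>j. \<Sum>n. u j n) = (\<Sum>n. \<Sum>j. u j n)"
proof -
  have int: "integrable (count_space UNIV) (u j)" for j
    using s1 by (simp add: integrable_count_space_nat_iff)
  have sn: "summable (\<lambda>j. norm (u j n))" for n
  proof (rule summable_comparison_test[OF _ s2])
    have "norm (u j n) \<le> (\<Sum>n. norm (u j n))" for j
      using sum_le_suminf[OF s1[of j], of "{n}"] by simp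
    thus "\<exists>N. \<forall>j\<ge>N. norm (norm (u j n)) \<le> (\<Sum>n. norm (u j n))" by simp
  qed
  have ni: "(\<integral>n. norm (u j n) \<partial>count_space UNIV) = (\<Sum>n. norm (u j n))" for j
    using int[of j] by (intro integral_count_space_nat) (simp add: integrable_count_space_nat_iff)
  have s2': "summable (\<lambda>j. \<integral>n. norm (u j n) \<partial>count_space UNIV)"
    using s2 by (simp add: ni)
  note R = integral_suminf[OF int AE_I2[OF sn] s2'] integrable_suminf[OF int AE_I2[OF sn] s2']
  have "(\<Sum>j. \<Sum>n. u j n) = (\<Sum>j. \<integral>n. u j n \<partial>count_space UNIV)"
    using int by (simp add: integral_count_space_nat)
  also have "\<dots> = (\<integral>n. (\<Sum>j. u j n) \<partial>count_space UNIV)" using R(1) by simp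
  also have "\<dots> = (\<Sum>n. \<Sum>j. u j n)" using R(2) by (simp add: integral_count_space_nat)
  finally show ?thesis .
qed



lemma lam_props:
  fixes c :: real assumes c: "c > 0"
  shows "0 < real (Suc n) powr (-c)" "real (Suc n) powr (-c) \<le> 1"
proof -
  show "0 < real (Suc n) powr (-c)" by simp
  have "1 \<le> real (Suc n) powr c" using c by (intro ge_one_powr_ge_zero) auto
  thus "real (Suc n) powr (-c) \<le> 1" by (simp add: powr_minus divide_simps)
qed

lemma dir_f_at:
  fixes c :: real assumes c: "c > 0"
  shows "dir_f a (complex_of_real (c * real (Suc j))) =
         (\<Sum>n. a (Suc n) * of_real ((real (Suc n) powr (-c)) ^ Suc j))"
  unfolding dir_f_def
proof (rule suminf_cong)
  fix n
  have "(of_nat (Suc n) :: complex) powr complex_of_real (c * real (Suc j)) =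
        of_real (real (Suc n) powr (c * real (Suc j)))"
    by (metis of_real_of_nat_eq of_nat_0_le_iff powr_of_real)
  moreover have "(real (Suc n) powr (-c)) ^ Suc j = inverse (real (Suc n) powr (c * real (Suc j)))"
    by (subst powr_power) (auto simp: powr_minus mult.commute)
  ultimately show "a (Suc n) / of_nat (Suc n) powr complex_of_real (c * real (Suc j)) =
         a (Suc n) * complex_of_real ((real (Suc n) powr (- c)) ^ Suc j)"
    by (simp add: divide_inverse)
qed

lemma Rc_expand:
  fixes c x :: real
  assumes c: "c > 0" and sumS: "summable (\<lambda>n. norm (a (Suc n)) * real (Suc n) powr (-c))"
      and x: "x \<ge> 0"
  shows "R_c a c x = (\<Sum>n. a (Suc n) * of_real (real (Suc n) powr (-c) * x * exp (-(real (Suc n) powr (-c) * x))))"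
proof -
  define lam where "lam n = real (Suc n) powr (-c)" for n
  have lp: "0 < lam n" "lam n \<le> 1" for n using lam_props[OF c] by (auto simp: lam_def)
  define K where "K j = (-1) ^ (Suc j + 1) * complex_of_real x ^ Suc j / of_nat (fact j)" for j
  define u where "u j n = a (Suc n) * of_real (lam n ^ Suc j) * K j" for j n
  have nK: "norm (K j) = x ^ Suc j / fact j" for j
    using x by (simp add: K_def norm_mult norm_divide norm_power)
  have nu: "norm (u j n) = norm (a (Suc n)) * lam n ^ Suc j * (x ^ Suc j / fact j)" for j n
    using lp[of n] by (simp add: u_def norm_mult nK norm_power)
  have le: "norm (u j n) \<le> norm (a (Suc n)) * lam n * (x ^ Suc j / fact j)" for j n
  proof -
    have "lam n ^ Suc j \<le> lam n ^ 1" using lp[of n] by (intro power_decreasing) auto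
    thus ?thesis unfolding nu by (intro mult_right_mono mult_left_mono) (auto simp: x)
  qed
  have sumS': "summable (\<lambda>n. norm (a (Suc n)) * lam n)" using sumS by (simp add: lam_def)
  have s1: "summable (\<lambda>n. norm (u j n))" for j
    by (rule summable_comparison_test[OF _ summable_mult2[OF sumS', of "x ^ Suc j / fact j"]])
       (use le in auto)
  have sx: "summable (\<lambda>j. x ^ Suc j / fact j)"
  proof -
    have "summable (\<lambda>j. x * (x ^ j /\<^sub>R fact j))"
      using summable_mult[OF exp_converges[THEN sums_summable], of x] by simp
    thus ?thesis by (simp add: divide_simps)
  qed
  have s2: "summable (\<lambda>j. \<Sum>n. norm (u j n))"
  proof (rule summable_comparison_test[OF _ summable_mult[OF sx, of "\<Sum>n. norm (a (Suc n)) * lam n"]])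
    have A: "(\<Sum>n. norm (u j n)) \<le> (\<Sum>n. norm (a (Suc n)) * lam n) * (x ^ Suc j / fact j)" for j
    proof -
      have "(\<Sum>n. norm (u j n)) \<le> (\<Sum>n. norm (a (Suc n)) * lam n * (x ^ Suc j / fact j))"
        by (rule suminf_le[OF le s1 summable_mult2[OF sumS']])
      also have "(\<Sum>n. norm (a (Suc n)) * lam n * (x ^ Suc j / fact j)) =
               (\<Sum>n. norm (a (Suc n)) * lam n) * (x ^ Suc j / fact j)"
        by (rule suminf_mult2[symmetric, OF sumS'])
      finally show ?thesis .
    qed
    have B: "0 \<le> (\<Sum>n. norm (u j n))" for j by (rule suminf_nonneg[OF s1]) simp
    show "\<exists>N. \<forall>j\<ge>N. norm (\<Sum>n. norm (u j n)) \<le> (\<Sum>n. norm (a (Suc n)) * lam n) * (x ^ Suc j / fact j)"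
      using A B by simp
  qed
  have trm: "(-1) ^ (Suc j + 1) * dir_f a (complex_of_real (c * real (Suc j))) * complex_of_real x ^ Suc j / of_nat (fact j)
              = (\<Sum>n. u j n)" for j
  proof -
    have sa: "summable (\<lambda>n. a (Suc n) * of_real (lam n ^ Suc j))"
    proof (rule summable_comparison_test[OF _ sumS'])
      have "norm (a (Suc n) * of_real (lam n ^ Suc j)) \<le> norm (a (Suc n)) * lam n" for n
      proof -
        have "lam n ^ Suc j \<le> lam n ^ 1" using lp[of n] by (intro power_decreasing) auto
        thus ?thesis using lp[of n] by (auto simp: norm_mult norm_power intro!: mult_left_mono)
      qed
      thus "\<exists>N. \<forall>n\<ge>N. norm (a (Suc n) * of_real (lam n ^ Suc j)) \<le> norm (a (Suc n)) * lam n" by auto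
    qed
    have "(-1) ^ (Suc j + 1) * dir_f a (complex_of_real (c * real (Suc j))) * complex_of_real x ^ Suc j / of_nat (fact j)
          = dir_f a (complex_of_real (c * real (Suc j))) * K j" by (simp add: K_def)
    also have "\<dots> = (\<Sum>n. a (Suc n) * of_real (lam n ^ Suc j)) * K j"
      using dir_f_at[OF c, of a j] by (simp add: lam_def)
    also have "\<dots> = (\<Sum>n. u j n)" unfolding u_def by (rule suminf_mult2[OF sa])
    finally show ?thesis .
  qed
  have inner: "(\<Sum>j. u j n) = a (Suc n) * of_real (lam n * x * exp (-(lam n * x)))" for n
  proof -
    define y where "y = lam n * x"
    have "(\<lambda>j. y * ((-y) ^ j /\<^sub>R fact j)) sums (y * exp (-y))"
      by (rule sums_mult[OF exp_converges])
    hence "(\<lambda>j. complex_of_real (y * ((-y) ^ j /\<^sub>R fact j))) sums of_real (y * exp (-y))"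
      by (rule sums_of_real)
    hence "(\<lambda>j. a (Suc n) * complex_of_real (y * ((-y) ^ j /\<^sub>R fact j))) sums (a (Suc n) * of_real (y * exp (-y)))"
      by (rule sums_mult)
    moreover have "a (Suc n) * complex_of_real (y * ((-y) ^ j /\<^sub>R fact j)) = u j n" for j
    proof -
      have e1: "y * ((-y) ^ j /\<^sub>R fact j) = (-1)^j * (lam n^Suc j * x^Suc j) / fact j"
      proof -
        have "(-y)^j = (-1)^j * y^j" by (rule power_minus)
        thus ?thesis unfolding y_def by (simp add: power_mult_distrib divide_inverse mult_ac)
      qed
      have "a (Suc n) * complex_of_real ((-1)^j * (lam n^Suc j * x^Suc j) / fact j) = u j n"
        unfolding u_def K_def by (simp add: mult_ac)
      thus ?thesis by (simp only: e1)
    qed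
    ultimately show ?thesis by (simp add: sums_iff y_def)
  qed
  have "R_c a c x = (\<Sum>j. \<Sum>n. u j n)" unfolding R_c_def by (rule suminf_cong) (rule trm)
  also have "\<dots> = (\<Sum>n. \<Sum>j. u j n)" by (rule suminf_swap_abs[OF s1 s2])
  also have "\<dots> = (\<Sum>n. a (Suc n) * of_real (real (Suc n) powr (-c) * x * exp (-(real (Suc n) powr (-c) * x))))"
    by (simp add: inner lam_def)
  finally show ?thesis .
qed



lemma cpowr_real_powr:
  fixes r d :: real assumes "r > 0"
  shows "(of_real (r powr d) :: complex) powr w = of_real r powr (of_real d * w)"
  using assms by (simp add: powr_def Ln_of_real mult_ac)

lemma norm_cpowr_real:
  fixes x :: real assumes "x > 0"
  shows "norm ((of_real x :: complex) powr z) = x powr Re z"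
  using assms by (subst norm_powr_real_powr) auto

lemma test1:
  fixes x :: real and s :: complex assumes "x > 0"
  shows "(of_real x :: complex) powr (s + 1 - 1) = of_real x powr (s - 1) * of_real x"
proof -
  have "(of_real x :: complex) powr (s + 1 - 1) = of_real x powr ((s - 1) + 1)" by (simp add: algebra_simps)
  also have "\<dots> = of_real x powr (s-1) * of_real x powr 1" by (rule powr_add)
  finally show ?thesis by simp
qed

theorem theorem2:
  fixes a :: "nat \<Rightarrow> complex" and \<sigma> c :: real and s :: complex
  assumes abs_conv: "\<And>t::real. t > \<sigma> \<Longrightarrow> summable (\<lambda>n. norm (a (Suc n)) / real (Suc n) powr t)"
      and abs_div: "\<And>t::real. t < \<sigma> \<Longrightarrow> \<not> summable (\<lambda>n. norm (a (Suc n)) / real (Suc n) powr t)"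
      and c_pos: "c > 0" and c_gt: "c > \<sigma>"
      and s_lo: "-1 < Re s" and s_hi: "Re s < - \<sigma> / c"
  shows "(\<lambda>x. R_c a c x * complex_of_real x powr (s - 1)) absolutely_integrable_on {0<..}
       \<and> integral {0<..} (\<lambda>x. R_c a c x * complex_of_real x powr (s - 1))
           = dir_f a (- (complex_of_real c) * s) * Gamma (s + 1)"
proof -
  define r where "r = Re s"
  have r1: "Re (s + 1) > 0" using s_lo by simp
  have r1': "r + 1 > 0" using s_lo by (simp add: r_def)
  have cr: "- c * r > \<sigma>"
  proof -
    have "r * c < (- \<sigma> / c) * c" using s_hi c_pos unfolding r_def by (rule mult_strict_right_mono)
    hence "r * c < - \<sigma>" using c_pos by simp
    thus ?thesis by (simp add: algebra_simps)
  qed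
  define lam where "lam n = real (Suc n) powr (-c)" for n
  have lp: "0 < lam n" "lam n \<le> 1" for n using lam_props[OF c_pos] by (auto simp: lam_def)
  have sumS: "summable (\<lambda>n. norm (a (Suc n)) * real (Suc n) powr (-c))"
    using abs_conv[OF c_gt] by (simp add: powr_minus divide_inverse)
  have sumS': "summable (\<lambda>n. norm (a (Suc n)) * lam n)" using sumS by (simp add: lam_def)
  define C where "C n = a (Suc n) * of_real (lam n)" for n
  define g where "g n = (\<lambda>x::real. C n * (of_real x powr (s + 1 - 1) / of_real (exp (lam n * x))))" for n
  define F where "F = (\<lambda>x::real. R_c a c x * complex_of_real x powr (s - 1))"
  define f where "f n = (\<lambda>x::real. indicator {0<..} x *\<^sub>R g n x)" for n
  have gsi: "set_integrable lebesgue {0<..} (g n)" for n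
    unfolding g_def
    by (rule set_integrable_mult_right) (rule absolutely_integrable_Gamma_integral[OF r1 lp(1)])
  have gint: "(g n has_integral C n * (of_real (lam n) powr (-(s+1)) * Gamma (s+1))) {0<..}" for n
    unfolding g_def by (rule has_integral_mult_right) (rule Gamma_scaled[OF r1 lp(1)])
  have gnorm: "norm (g n x) = norm (C n) * (x powr (r + 1 - 1) / exp (lam n * x))" if "x > 0" for n x
    using that by (simp add: g_def norm_mult norm_divide norm_cpowr_real r_def)
  have gnint: "((\<lambda>x. norm (g n x)) has_integral norm (C n) * (lam n powr (-(r+1)) * Gamma (r+1))) {0<..}" for n
  proof -
    have "((\<lambda>x. norm (C n) * (x powr (r + 1 - 1) / exp (lam n * x))) has_integral
           norm (C n) * (lam n powr (-(r+1)) * Gamma (r+1))) {0<..}"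
      by (rule has_integral_mult_right) (rule Gamma_scaled_real[OF r1' lp(1)])
    thus ?thesis by (rule has_integral_cong[THEN iffD2, rotated]) (simp add: gnorm)
  qed
  have nval: "norm (C n) * (lam n powr (-(r+1)) * Gamma (r+1)) =
              Gamma (r+1) * (norm (a (Suc n)) / real (Suc n) powr (- c * r))" for n
  proof -
    have "lam n * lam n powr (-(r+1)) = lam n powr 1 * lam n powr (-(r+1))"
      using lp(1)[of n] by simp
    also have "\<dots> = lam n powr (-r)" by (subst powr_add[symmetric]) simp
    finally have "lam n * lam n powr (-(r+1)) = lam n powr (-r)" .
    moreover have "lam n powr (-r) = 1 / real (Suc n) powr (- c * r)"
    proof -
      have "lam n powr (-r) = real (Suc n) powr (c * r)" unfolding lam_def powr_powr by simp
      moreover have "real (Suc n) powr (- c * r) = inverse (real (Suc n) powr (c * r))"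
        using powr_minus[of "real (Suc n)" "c * r"] by simp
      ultimately show ?thesis by (simp add: divide_inverse)
    qed
    ultimately have eq: "lam n * lam n powr (-(r+1)) = 1 / real (Suc n) powr (- c * r)" by simp
    have "norm (C n) * (lam n powr (-(r+1)) * Gamma (r+1)) =
          Gamma (r+1) * norm (a (Suc n)) * (lam n * lam n powr (-(r+1)))"
      using lp(1)[of n] by (simp add: C_def norm_mult mult_ac)
    also have "\<dots> = Gamma (r+1) * (norm (a (Suc n)) / real (Suc n) powr (- c * r))"
      by (simp only: eq) simp
    finally show ?thesis .
  qed
  have point: "F x = (\<Sum>n. g n x)" if x: "x > 0" for x
  proof -
    have RE: "R_c a c x = (\<Sum>n. a (Suc n) * of_real (lam n * x * exp (-(lam n * x))))"
      using Rc_expand[OF c_pos sumS, of x] x by (simp add: lam_def)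
    have sm: "summable (\<lambda>n. a (Suc n) * of_real (lam n * x * exp (-(lam n * x))))"
    proof (rule summable_norm_cancel, rule summable_comparison_test[OF _ summable_mult2[OF sumS', of x]])
      have "norm (norm (a (Suc n) * of_real (lam n * x * exp (-(lam n * x))))) \<le> norm (a (Suc n)) * lam n * x" for n
      proof -
        have "exp (-(lam n * x)) \<le> 1" using lp(1)[of n] x by simp
        hence "lam n * x * exp (-(lam n * x)) \<le> lam n * x * 1"
          using lp(1)[of n] x by (intro mult_left_mono) auto
        thus ?thesis using lp(1)[of n] x by (simp add: norm_mult mult_left_mono mult.assoc)
      qed
      thus "\<exists>N. \<forall>n\<ge>N. norm (norm (a (Suc n) * of_real (lam n * x * exp (-(lam n * x))))) \<le> norm (a (Suc n)) * lam n * x"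
        by blast
    qed
    have px: "(of_real x :: complex) powr s = of_real x powr (s-1) * of_real x"
      using test1[OF x, of s] by simp
    have tm: "a (Suc n) * of_real (lam n * x * exp (-(lam n * x))) * complex_of_real x powr (s - 1) = g n x" for n
      using x by (simp add: g_def C_def px exp_minus divide_inverse mult_ac)
    have "F x = (\<Sum>n. a (Suc n) * of_real (lam n * x * exp (-(lam n * x)))) * complex_of_real x powr (s - 1)"
      by (simp add: F_def RE)
    also have "\<dots> = (\<Sum>n. a (Suc n) * of_real (lam n * x * exp (-(lam n * x))) * complex_of_real x powr (s - 1))"
      by (rule suminf_mult2[OF sm])
    also have "\<dots> = (\<Sum>n. g n x)" by (rule suminf_cong) (rule tm)
    finally show ?thesis .
  qed
  have fint: "integrable lebesgue (f n)" for n
    using gsi[of n] by (simp add: f_def set_integrable_def)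
  have fsum: "summable (\<lambda>n. norm (f n x))" for x
  proof (cases "x > 0")
    case True
    have "norm (f n x) \<le> norm (a (Suc n)) * lam n * x powr r" for n
    proof -
      have e: "1 \<le> exp (lam n * x)" using lp(1)[of n] True by simp
      have "x powr r / exp (lam n * x) \<le> x powr r"
        using e by (simp add: divide_le_eq_1 field_simps mult_le_cancel_left1 order_trans[OF _ mult_left_mono[OF e]])
      hence "norm (C n) * (x powr r / exp (lam n * x)) \<le> norm (C n) * x powr r"
        by (intro mult_left_mono) auto
      thus ?thesis using True gnorm[OF True, of n] lp(1)[of n]
        by (simp add: f_def C_def norm_mult)
    qed
    thus ?thesis
      by (intro summable_comparison_test[OF _ summable_mult2[OF sumS', of "x powr r"]]) auto
  next
    case False
    thus ?thesis by (simp add: f_def)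
  qed
  have fnorm_int: "(\<integral>x. norm (f n x) \<partial>lebesgue) = Gamma (r+1) * (norm (a (Suc n)) / real (Suc n) powr (- c * r))" for n
  proof -
    have "(\<integral>x. norm (f n x) \<partial>lebesgue) = (LINT x:{0<..}|lebesgue. norm (g n x))"
      by (simp add: f_def set_lebesgue_integral_def)
    also have "\<dots> = integral {0<..} (\<lambda>x. norm (g n x))"
      by (rule set_lebesgue_integral_eq_integral(2)[OF set_integrable_norm[OF gsi]])
    also have "\<dots> = norm (C n) * (lam n powr (-(r+1)) * Gamma (r+1))"
      by (rule integral_unique[OF gnint])
    also have "\<dots> = Gamma (r+1) * (norm (a (Suc n)) / real (Suc n) powr (- c * r))" by (rule nval)
    finally show ?thesis .
  qed
  have fns: "summable (\<lambda>n. \<integral>x. norm (f n x) \<partial>lebesgue)"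
    unfolding fnorm_int by (rule summable_mult[OF abs_conv[OF cr]])
  note SI = integrable_suminf[OF fint AE_I2[OF fsum] fns] integral_suminf[OF fint AE_I2[OF fsum] fns]
  have sumf: "(\<lambda>x. \<Sum>n. f n x) = (\<lambda>x. indicator {0<..} x *\<^sub>R F x)"
  proof
    fix x show "(\<Sum>n. f n x) = indicator {0<..} x *\<^sub>R F x"
      by (cases "x > 0") (simp_all add: f_def point)
  qed
  have Fsi: "set_integrable lebesgue {0<..} F"
    using SI(1) by (simp add: sumf set_integrable_def)
  have fval: "integral\<^sup>L lebesgue (f n) = (a (Suc n) / of_nat (Suc n) powr (- (complex_of_real c) * s)) * Gamma (s + 1)" for n
  proof -
    have "integral\<^sup>L lebesgue (f n) = (LINT x:{0<..}|lebesgue. g n x)"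
      by (simp add: f_def set_lebesgue_integral_def)
    also have "\<dots> = integral {0<..} (g n)"
      by (rule set_lebesgue_integral_eq_integral(2)[OF gsi])
    also have "\<dots> = C n * (of_real (lam n) powr (-(s+1)) * Gamma (s+1))"
      by (rule integral_unique[OF gint])
    also have "\<dots> = (a (Suc n) / of_nat (Suc n) powr (- (complex_of_real c) * s)) * Gamma (s + 1)"
    proof -
      have "of_real (lam n) * of_real (lam n) powr (-(s+1)) = (of_real (lam n) :: complex) powr 1 * of_real (lam n) powr (-(s+1))"
        by simp
      also have "\<dots> = of_real (lam n) powr (-s)" by (subst powr_add[symmetric]) simp
      also have "\<dots> = of_real (real (Suc n)) powr (of_real (-c) * (-s))"
        unfolding lam_def by (rule cpowr_real_powr) simp
      also have "\<dots> = inverse (of_nat (Suc n) powr (- (complex_of_real c) * s))"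
        by (simp add: powr_minus[symmetric])
      finally have "of_real (lam n) * of_real (lam n) powr (-(s+1)) = inverse (of_nat (Suc n) powr (- (complex_of_real c) * s))" .
      thus ?thesis by (simp add: C_def divide_inverse mult_ac)
    qed
    finally show ?thesis .
  qed
  have Tsum: "summable (\<lambda>n. a (Suc n) / of_nat (Suc n) powr (- (complex_of_real c) * s))"
  proof (rule summable_norm_cancel)
    have "norm (a (Suc n) / of_nat (Suc n) powr (- (complex_of_real c) * s)) =
          norm (a (Suc n)) / real (Suc n) powr (- c * r)" for n
      using norm_cpowr_real[of "real (Suc n)" "- (complex_of_real c) * s"]
      by (simp add: norm_divide r_def)
    thus "summable (\<lambda>n. norm (a (Suc n) / of_nat (Suc n) powr (- (complex_of_real c) * s)))"
      using abs_conv[OF cr] by simp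
  qed
  have "integral {0<..} F = (LINT x:{0<..}|lebesgue. F x)"
    by (rule set_lebesgue_integral_eq_integral(2)[OF Fsi, symmetric])
  also have "\<dots> = (\<integral>x. (\<Sum>n. f n x) \<partial>lebesgue)"
    by (simp add: sumf set_lebesgue_integral_def)
  also have "\<dots> = (\<Sum>n. integral\<^sup>L lebesgue (f n))" by (rule SI(2))
  also have "\<dots> = (\<Sum>n. (a (Suc n) / of_nat (Suc n) powr (- (complex_of_real c) * s)) * Gamma (s + 1))"
    by (simp add: fval)
  also have "\<dots> = dir_f a (- (complex_of_real c) * s) * Gamma (s + 1)"
    unfolding dir_f_def by (rule suminf_mult2[OF Tsum, symmetric])
  finally show ?thesis using Fsi by (simp add: F_def)
qed

end
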